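(* Let $\beta\in(0,d]$ and let $Q\subset\mathbb{R}^d$ be a cube. Suppose $C'>0$ is a constant such that $$\sum_{k}\int_{Q_{k}} f \,d\mathcal{H}^{\beta,Q}_{\infty} \leq C' \int_{\cup_{k} Q_{k}} f\,d\mathcal{H}^{\beta,Q}_{\infty}$$ for every non-negative $f$ and every family of non-overlapping cubes $\{Q_{k}\}\subset\mathcal{D}(Q)$ which satisfies $\sum_{Q_{k} \subset Q'}l(Q_{k})^\beta \leq 2l(Q')^\beta$ for each $Q' \in \mathcal{D}(Q)$. Then $$\mathcal{H}^{\beta,Q}_{\infty}\left(\left\{ x: \mathcal{M}^{\beta,Q}_\infty f(x)>t\right\}\right) \leq \frac{C'}{t} \int_{\mathbb{R}^d} |f|\,d\mathcal{H}^{\beta,Q}_{\infty}$$ for all $t>0$ and all $f \in L^1(\mathbb{R}^d;\mathcal{H}^{\beta,Q}_{\infty})$.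
   Context: For a cube $Q=a+[0,\ell)^d$ (cubes are half-open), the dyadic lattice generated by $Q$ is $\mathcal{D}(Q)=\{a+2^{-j}\ell(m+[0,1)^d): j\in\mathbb{Z}, m\in\mathbb{Z}^d\}$. The dyadic Hausdorff content adapted to $Q$ is $\mathcal{H}^{\beta,Q}_{\infty}(E)= \inf \{\sum_{i} l(Q_i)^\beta : E \subset \bigcup_{i} Q_i,\ Q_i \in \mathcal{D}(Q) \}$, $l(\cdot)$ the side length. For $f\ge0$ and a set $A$, $\int_A f\,d\mathcal{H}^{\beta,Q}_\infty=\int_0^\infty \mathcal{H}^{\beta,Q}_\infty(\{x\in A:f(x)>t\})\,dt$. $f$ is $\mathcal{H}^{\beta,Q}_\infty$-quasicontinuous if for every $\epsilon>0$ there is an open $O$ with $\mathcal{H}^{\beta,Q}_\infty(O)<\epsilon$ and $f|_{O^c}$ continuous; $L^1(\mathbb{R}^d;\mathcal{H}^{\beta,Q}_\infty)$ is the set of such $f$ with $\int_{\mathbb{R}^d}|f|\,d\mathcal{H}^{\beta,Q}_\infty<\infty$. The dyadic maximal function is $\mathcal{M}^{\beta,Q}_\infty f(x) = \sup_{Q' \in\mathcal{D}(Q)} \chi_{Q'}(x)\, l(Q')^{-\beta} \int_{Q'} |f| \,d\mathcal{H}^{\beta,Q}_{\infty}$. *)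

theory Defs
  imports "HOL-Analysis.Analysis"
begin

text \<open>Half-open cube  b + [0,l)^d  in R^d (d = CARD('n)).\<close>
definition cube :: "real^'n \<Rightarrow> real \<Rightarrow> (real^'n) set" where
  "cube b l = {x. \<forall>i. b$i \<le> x$i \<and> x$i < b$i + l}"

text \<open>Side length of a cube (well defined for nonempty cubes).\<close>
definition sidelen :: "(real^'n) set \<Rightarrow> real" where
  "sidelen S = (SOME l. l > 0 \<and> (\<exists>b. S = cube b l))"

text \<open>Dyadic lattice generated by the cube Q = cube a l.\<close>
definition dyadic :: "real^'n \<Rightarrow> real \<Rightarrow> (real^'n) set set" where
  "dyadic a l = {cube (\<chi> i. a$i + 2 powr (- real_of_int j) * l * real_of_int (m i))
                      (2 powr (- real_of_int j) * l) | j m. True}"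

definition hcont :: "real \<Rightarrow> real^'n \<Rightarrow> real \<Rightarrow> (real^'n) set \<Rightarrow> ennreal" where
  "hcont \<beta> a l E = Inf {(\<Sum>\<^sub>\<infinity> C\<in>\<C>. ennreal (sidelen C powr \<beta>)) | \<C>.
        countable \<C> \<and> \<C> \<subseteq> dyadic a l \<and> E \<subseteq> \<Union>\<C>}"

definition choquet :: "real \<Rightarrow> real^'n \<Rightarrow> real \<Rightarrow> (real^'n) set \<Rightarrow> (real^'n \<Rightarrow> real) \<Rightarrow> ennreal" where
  "choquet \<beta> a l A f = (\<integral>\<^sup>+ t. indicator {0<..} t * hcont \<beta> a l {x\<in>A. f x > t} \<partial>lborel)"

definition quasicontinuous :: "real \<Rightarrow> real^'n \<Rightarrow> real \<Rightarrow> (real^'n \<Rightarrow> real) \<Rightarrow> bool" where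
  "quasicontinuous \<beta> a l f \<longleftrightarrow>
     (\<forall>\<epsilon>>0. \<exists>U. open U \<and> hcont \<beta> a l U < ennreal \<epsilon> \<and> continuous_on (- U) f)"

definition L1_content :: "real \<Rightarrow> real^'n \<Rightarrow> real \<Rightarrow> (real^'n \<Rightarrow> real) set" where
  "L1_content \<beta> a l = {f. quasicontinuous \<beta> a l f \<and> choquet \<beta> a l UNIV (\<lambda>x. \<bar>f x\<bar>) < \<infinity>}"

definition maxfun :: "real \<Rightarrow> real^'n \<Rightarrow> real \<Rightarrow> (real^'n \<Rightarrow> real) \<Rightarrow> real^'n \<Rightarrow> ennreal" where
  "maxfun \<beta> a l f x = (SUP Q'\<in>dyadic a l.
      indicator Q' x * ennreal (sidelen Q' powr (- \<beta>)) * choquet \<beta> a l Q' (\<lambda>y. \<bar>f y\<bar>))"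

end

theory Submission
  imports Defs
begin

definition sj :: "real \<Rightarrow> int \<Rightarrow> real" where
  "sj l j = 2 powr (- real_of_int j) * l"

definition dc :: "real^'n \<Rightarrow> real \<Rightarrow> int \<Rightarrow> ('n \<Rightarrow> int) \<Rightarrow> (real^'n) set" where
  "dc a l j m = cube (\<chi> i. a$i + sj l j * real_of_int (m i)) (sj l j)"

lemma sj_pos: "0 < l \<Longrightarrow> 0 < sj l j"
  by (simp add: sj_def)

lemma sj_mono_iff: "0 < l \<Longrightarrow> sj l j \<le> sj l k \<longleftrightarrow> k \<le> j"
  by (simp add: sj_def)

lemma sj_inj: "0 < l \<Longrightarrow> sj l j = sj l k \<longleftrightarrow> k = j"
  by (smt (verit) sj_mono_iff)

lemma dyadic_eq: "dyadic a l = {dc a l j m | j m. True}"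
  unfolding dyadic_def dc_def sj_def by (simp add: mult.assoc)

lemma mem_dc:
  assumes "0 < l"
  shows "x \<in> dc a l j m \<longleftrightarrow> (\<forall>i. \<lfloor>(x$i - a$i) / sj l j\<rfloor> = m i)"
proof -
  have s: "0 < sj l j" using assms by (rule sj_pos)
  have "\<And>i. (a$i + sj l j * m i \<le> x$i \<and> x$i < a$i + sj l j * m i + sj l j)
         \<longleftrightarrow> \<lfloor>(x$i - a$i) / sj l j\<rfloor> = m i"
    using s by (simp add: floor_eq_iff field_simps)
  then show ?thesis unfolding dc_def cube_def by simp
qed

lemma cube_nonempty: "0 < s \<Longrightarrow> b \<in> cube b s"
  by (simp add: cube_def)

lemma cube_side_unique:
  assumes "0 < s" "0 < s'" "cube b s = cube b' s'"
  shows "s = s'"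
proof -
  have "b \<in> cube b' s'" using assms cube_nonempty by metis
  moreover have "b' \<in> cube b s" using assms cube_nonempty by metis
  ultimately have bb: "b = b'" by (auto simp: cube_def vec_eq_iff intro: antisym)
  show ?thesis
  proof (rule ccontr)
    assume "s \<noteq> s'"
    then consider "s < s'" | "s' < s" by linarith
    then show False
    proof cases
      case 1
      have "b + (\<chi> i. s) \<in> cube b s'" using 1 assms by (simp add: cube_def)
      moreover have "b + (\<chi> i. s) \<notin> cube b s" by (simp add: cube_def)
      ultimately show False using assms bb by simp
    next
      case 2
      have "b + (\<chi> i. s') \<in> cube b s" using 2 \<open>0 < s'\<close> by (simp add: cube_def)
      moreover have "b + (\<chi> i. s') \<notin> cube b s'" by (simp add: cube_def)
      ultimately show False using assms bb by simp
    qed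
  qed
qed

lemma sidelen_cube: "0 < s \<Longrightarrow> sidelen (cube b s) = s"
  unfolding sidelen_def
  by (rule some_equality) (auto dest: cube_side_unique)

lemma sidelen_dc: "0 < l \<Longrightarrow> sidelen (dc a l j m) = sj l j"
  unfolding dc_def by (simp add: sidelen_cube sj_pos)

definition idx :: "real^'n \<Rightarrow> real \<Rightarrow> int \<Rightarrow> real^'n \<Rightarrow> ('n \<Rightarrow> int)" where
  "idx a l j x = (\<lambda>i. \<lfloor>(x$i - a$i) / sj l j\<rfloor>)"

lemma mem_dc_idx: "0 < l \<Longrightarrow> x \<in> dc a l j m \<longleftrightarrow> idx a l j x = m"
  by (auto simp: mem_dc idx_def)

lemma idx_coarse:
  assumes "0 < l" "j \<le> k"
  shows "idx a l j x = (\<lambda>i. idx a l k x i div 2 ^ nat (k - j))"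
proof
  fix i
  have e: "sj l j = sj l k * real_of_int (2 ^ nat (k - j))"
    using assms by (simp add: sj_def powr_realpow[symmetric] powr_add[symmetric] ) 
  have "(x$i - a$i) / sj l j = ((x$i - a$i) / sj l k) / real_of_int (2 ^ nat (k - j))"
    unfolding e by (simp add: divide_divide_eq_left)
  moreover have "\<lfloor>((x$i - a$i) / sj l k) / real_of_int (2 ^ nat (k - j))\<rfloor> = \<lfloor>(x$i - a$i) / sj l k\<rfloor> div 2 ^ nat (k - j)"
    by (rule floor_divide_real_eq_div) simp
  ultimately show "idx a l j x i = idx a l k x i div 2 ^ nat (k - j)"
    unfolding idx_def by metis
qed

lemma dc_nest:
  assumes l: "0 < l" and jk: "j \<le> k" and x: "x \<in> dc a l k n" "x \<in> dc a l j m"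
  shows "dc a l k n \<subseteq> dc a l j m"
proof
  fix y assume y: "y \<in> dc a l k n"
  have "idx a l k y = idx a l k x" using x y l by (simp add: mem_dc_idx)
  then have "idx a l j y = idx a l j x" using idx_coarse[OF l jk, of a y] idx_coarse[OF l jk, of a x] by simp
  then show "y \<in> dc a l j m" using x l by (simp add: mem_dc_idx)
qed

lemma dyadic_cases:
  assumes "C \<in> dyadic a l"
  obtains j m where "C = dc a l j m"
  using assms by (auto simp: dyadic_eq)

lemma dc_in_dyadic: "dc a l j m \<in> dyadic a l"
  by (auto simp: dyadic_eq)

lemma dyadic_sidelen_pos: "0 < l \<Longrightarrow> C \<in> dyadic a l \<Longrightarrow> 0 < sidelen C"
  by (auto elim!: dyadic_cases simp: sidelen_dc sj_pos)

lemma dyadic_nonempty: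
  assumes l: "0 < l" and C: "C \<in> dyadic a l" shows "C \<noteq> {}"
proof -
  obtain j m where "C = dc a l j m" using C by (rule dyadic_cases)
  then show ?thesis using cube_nonempty[OF sj_pos[OF l]] unfolding dc_def by blast
qed

lemma dyadic_nest:
  assumes l: "0 < l" and C: "C1 \<in> dyadic a l" "C2 \<in> dyadic a l"
    and le: "sidelen C1 \<le> sidelen C2"
  shows "C1 \<subseteq> C2 \<or> C1 \<inter> C2 = {}"
proof -
  obtain k n where 1: "C1 = dc a l k n" using C(1) by (rule dyadic_cases)
  obtain j m where 2: "C2 = dc a l j m" using C(2) by (rule dyadic_cases)
  have "j \<le> k" using le l by (simp add: 1 2 sidelen_dc sj_mono_iff)
  then show ?thesis using dc_nest[OF l] 1 2 by blast
qed

lemma dyadic_sub_side: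
  assumes l: "0 < l" and C: "C1 \<in> dyadic a l" "C2 \<in> dyadic a l" and sub: "C1 \<subseteq> C2"
  shows "sidelen C1 \<le> sidelen C2"
proof (rule ccontr)
  assume "\<not> ?thesis"
  then have "C2 \<subseteq> C1 \<or> C2 \<inter> C1 = {}" using dyadic_nest[OF l C(2) C(1)] by simp
  then have "C1 = C2" using sub dyadic_nonempty[OF l C(1)] by blast
  with \<open>\<not> ?thesis\<close> show False by simp
qed

lemma dyadic_eq_if:
  assumes l: "0 < l" and C: "C1 \<in> dyadic a l" "C2 \<in> dyadic a l"
    and "sidelen C1 = sidelen C2" "C1 \<inter> C2 \<noteq> {}"
  shows "C1 = C2"
  using dyadic_nest[OF l C(1,2)] dyadic_nest[OF l C(2,1)] assms(4,5) by auto

lemma dyadic_disj_or_sub: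
  assumes l: "0 < l" and C: "C1 \<in> dyadic a l" "C2 \<in> dyadic a l"
  shows "C1 \<subseteq> C2 \<or> C2 \<subseteq> C1 \<or> C1 \<inter> C2 = {}"
  using dyadic_nest[OF l C(1,2)] dyadic_nest[OF l C(2,1)] by (cases "sidelen C1 \<le> sidelen C2") auto

lemma countable_dyadic: "countable (dyadic a l)"
proof -
  have "dyadic a l = (\<lambda>(j, m). dc a l j m) ` UNIV" by (auto simp: dyadic_eq)
  then show ?thesis by simp
qed

lemma finite_levels:
  assumes "0 < c" "0 < l"
  shows "finite {j::int. c \<le> sj l j \<and> sj l j \<le> B}"
proof (cases "0 < B")
  case False
  then have "\<And>j. \<not> (c \<le> sj l j \<and> sj l j \<le> B)" using assms by linarith
  then have "{j::int. c \<le> sj l j \<and> sj l j \<le> B} = {}" by auto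
  then show ?thesis by (metis finite.emptyI)
next
  case True
  have "{j::int. c \<le> sj l j \<and> sj l j \<le> B} \<subseteq> {\<lceil>- log 2 (B / l)\<rceil> .. \<lfloor>- log 2 (c / l)\<rfloor>}"
  proof
    fix j assume j: "j \<in> {j::int. c \<le> sj l j \<and> sj l j \<le> B}"
    have "c / l \<le> 2 powr (- real_of_int j)" "2 powr (- real_of_int j) \<le> B / l"
      using j assms by (auto simp: sj_def field_simps)
    then have "log 2 (c / l) \<le> - real_of_int j" "- real_of_int j \<le> log 2 (B / l)"
      using assms True by (auto simp: log_le_iff le_log_iff)
    then show "j \<in> {\<lceil>- log 2 (B / l)\<rceil> .. \<lfloor>- log 2 (c / l)\<rfloor>}"
      by (auto simp: ceiling_le_iff le_floor_iff)
  qed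
  then show ?thesis by (rule finite_subset) simp
qed

lemma exists_max:
  assumes l: "0 < l" and S: "\<S> \<subseteq> dyadic a l" and B: "\<forall>S\<in>\<S>. sidelen S \<le> B" and R: "R \<in> \<S>"
  shows "\<exists>W\<in>\<S>. R \<subseteq> W \<and> (\<forall>W'\<in>\<S>. W \<subseteq> W' \<longrightarrow> W' = W)"
proof -
  define V where "V = sidelen ` {W\<in>\<S>. R \<subseteq> W}"
  have Rd: "R \<in> dyadic a l" using R S by auto
  have "V \<subseteq> sj l ` {j. sidelen R \<le> sj l j \<and> sj l j \<le> B}"
  proof
    fix v assume "v \<in> V"
    then obtain W where W: "W \<in> \<S>" "R \<subseteq> W" "v = sidelen W" by (auto simp: V_def)
    obtain j m where "W = dc a l j m" using W S by (meson dyadic_cases subsetD)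
    moreover have "sidelen R \<le> sidelen W" using dyadic_sub_side[OF l Rd _ W(2)] W S by auto
    ultimately show "v \<in> sj l ` {j. sidelen R \<le> sj l j \<and> sj l j \<le> B}"
      using W B l by (auto simp: sidelen_dc)
  qed
  then have fin: "finite V"
    using finite_levels[OF dyadic_sidelen_pos[OF l Rd] l] finite_surj by blast
  have ne: "V \<noteq> {}" using R by (auto simp: V_def)
  obtain W where W: "W \<in> \<S>" "R \<subseteq> W" "sidelen W = Max V"
    using Max_in[OF fin ne] by (auto simp: V_def)
  have "\<forall>W'\<in>\<S>. W \<subseteq> W' \<longrightarrow> W' = W"
  proof (intro ballI impI)
    fix W' assume W': "W' \<in> \<S>" "W \<subseteq> W'"
    have Wd: "W \<in> dyadic a l" and W'd: "W' \<in> dyadic a l" using W W' S by auto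
    have "sidelen W' \<in> V" using W' W by (auto simp: V_def)
    then have "sidelen W' \<le> sidelen W" using W fin by simp
    moreover have "sidelen W \<le> sidelen W'" using dyadic_sub_side[OF l _ _ W'(2)] W W' S by auto
    moreover have "W \<inter> W' \<noteq> {}" using W' dyadic_nonempty[OF l Wd] by auto
    ultimately show "W' = W" using dyadic_eq_if[OF l W'd Wd] by auto
  qed
  then show ?thesis using W by blast
qed

lemma max_disjoint:
  assumes l: "0 < l" and S: "\<S> \<subseteq> dyadic a l"
    and W1: "W1 \<in> \<S>" "\<forall>W'\<in>\<S>. W1 \<subseteq> W' \<longrightarrow> W' = W1"
    and W2: "W2 \<in> \<S>" "\<forall>W'\<in>\<S>. W2 \<subseteq> W' \<longrightarrow> W' = W2"
    and ne: "W1 \<noteq> W2"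
  shows "W1 \<inter> W2 = {}"
  using dyadic_disj_or_sub[OF l S[THEN subsetD, OF W1(1)] S[THEN subsetD, OF W2(1)]] W1 W2 S ne by auto

lemma hcont_mono: "S \<subseteq> T \<Longrightarrow> hcont \<beta> a l S \<le> hcont \<beta> a l T"
  unfolding hcont_def by (rule Inf_superset_mono) blast

lemma hcont_le:
  assumes "countable \<C>" "\<C> \<subseteq> dyadic a l" "S \<subseteq> \<Union>\<C>"
  shows "hcont \<beta> a l S \<le> (\<Sum>\<^sub>\<infinity> C\<in>\<C>. ennreal (sidelen C powr \<beta>))"
  unfolding hcont_def by (rule Inf_lower) (use assms in blast)

lemma choquet_mono: "S \<subseteq> T \<Longrightarrow> choquet \<beta> a l S f \<le> choquet \<beta> a l T f"
  unfolding choquet_def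
  by (intro nn_integral_mono mult_left_mono hcont_mono) auto

definition pk :: "real \<Rightarrow> real^'n \<Rightarrow> real \<Rightarrow> (real^'n) set set \<Rightarrow> bool" where
  "pk \<beta> a l \<Q> \<longleftrightarrow> (\<forall>Q'\<in>dyadic a l. (\<Sum>\<^sub>\<infinity> R\<in>{R\<in>\<Q>. R \<subseteq> Q'}. ennreal (sidelen R powr \<beta>))
                          \<le> ennreal (2 * sidelen Q' powr \<beta>))"

lemma ens[simp]: "(f::'a \<Rightarrow> ennreal) summable_on S"
  by (rule nonneg_summable_on_complete) simp

lemma infsum_ennreal_mono_set:
  fixes f :: "'a \<Rightarrow> ennreal"
  shows "A \<subseteq> B \<Longrightarrow> infsum f A \<le> infsum f B"
  by (rule infsum_mono_neutral) auto

lemma fin_additive: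
  fixes f :: "'a \<Rightarrow> ennreal"
  assumes "finite F" "\<forall>x\<in>F. \<forall>y\<in>F. x \<noteq> y \<longrightarrow> g x \<inter> g y = {}"
  shows "(\<Sum>W\<in>F. infsum f (g W)) = infsum f (\<Union>W\<in>F. g W)"
  using assms
proof (induction F rule: finite_induct)
  case empty
  then show ?case by simp
next
  case (insert x F)
  have "(\<Sum>W\<in>insert x F. infsum f (g W)) = infsum f (g x) + infsum f (\<Union>W\<in>F. g W)"
    using insert by simp
  also have "\<dots> = infsum f (g x \<union> (\<Union>W\<in>F. g W))"
    by (rule infsum_Un_disjoint[symmetric]) (use insert in auto)
  finally show ?case by simp
qed

lemma dsum:
  fixes f :: "'b set \<Rightarrow> ennreal"
  assumes disj: "\<forall>W1\<in>\<W>. \<forall>W2\<in>\<W>. W1 \<noteq> W2 \<longrightarrow> W1 \<inter> W2 = {}"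
    and ne: "\<forall>P\<in>M. P \<noteq> {}"
  shows "(\<Sum>\<^sub>\<infinity>W\<in>\<W>. \<Sum>\<^sub>\<infinity>P\<in>{P\<in>M. P \<subseteq> W}. f P) \<le> (\<Sum>\<^sub>\<infinity>P\<in>M. f P)"
proof (rule infsum_le_finite_sums)
  show "(\<lambda>W. \<Sum>\<^sub>\<infinity>P\<in>{P\<in>M. P \<subseteq> W}. f P) summable_on \<W>" by simp
  fix F assume F: "finite F" "F \<subseteq> \<W>"
  have "(\<Sum>W\<in>F. \<Sum>\<^sub>\<infinity>P\<in>{P\<in>M. P \<subseteq> W}. f P) = infsum f (\<Union>W\<in>F. {P\<in>M. P \<subseteq> W})"
  proof (rule fin_additive[OF F(1)], intro ballI impI)
    fix x y assume "x \<in> F" "y \<in> F" "x \<noteq> y"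
    then have "x \<inter> y = {}" using disj F by blast
    then show "{P \<in> M. P \<subseteq> x} \<inter> {P \<in> M. P \<subseteq> y} = {}" using ne by blast
  qed
  also have "\<dots> \<le> infsum f M" by (rule infsum_ennreal_mono_set) auto
  finally show "(\<Sum>W\<in>F. \<Sum>\<^sub>\<infinity>P\<in>{P\<in>M. P \<subseteq> W}. f P) \<le> infsum f M" .
qed

lemma comb:
  assumes l: "0 < l" and b: "0 < \<beta>" and P: "\<P> \<subseteq> dyadic a l"
  shows "\<exists>M\<subseteq>\<P>. pk \<beta> a l M \<and> hcont \<beta> a l (\<Union>\<P>) \<le> (\<Sum>\<^sub>\<infinity>P\<in>M. ennreal (sidelen P powr \<beta>))"
proof -
  define \<AA> where "\<AA> = {M. M \<subseteq> \<P> \<and> pk \<beta> a l M}"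
  have "\<forall>C\<in>chains \<AA>. \<Union>C \<in> \<AA>"
  proof
    fix C assume C: "C \<in> chains \<AA>"
    have sub: "\<Union>C \<subseteq> \<P>" using chainsD2[OF C] by (auto simp: \<AA>_def)
    have Cc: "subset.chain \<AA> C" using C by (simp add: chains_alt_def)
    have "pk \<beta> a l (\<Union>C)" unfolding pk_def
    proof
      fix Q' assume Q': "Q' \<in> dyadic a l"
      show "(\<Sum>\<^sub>\<infinity>R\<in>{R\<in>\<Union>C. R \<subseteq> Q'}. ennreal (sidelen R powr \<beta>)) \<le> ennreal (2 * sidelen Q' powr \<beta>)"
      proof (rule infsum_le_finite_sums)
        show "(\<lambda>R. ennreal (sidelen R powr \<beta>)) summable_on {R\<in>\<Union>C. R \<subseteq> Q'}" by simp
        fix F assume F: "finite F" "F \<subseteq> {R\<in>\<Union>C. R \<subseteq> Q'}"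
        show "(\<Sum>R\<in>F. ennreal (sidelen R powr \<beta>)) \<le> ennreal (2 * sidelen Q' powr \<beta>)"
        proof (cases "F = {}")
          case True then show ?thesis by simp
        next
          case False
          have "C \<noteq> {}" using F False by auto
          then obtain X where X: "X \<in> C" "F \<subseteq> X"
            using finite_subset_Union_chain[OF F(1) _ _ Cc] F by blast
          have XA: "pk \<beta> a l X" using X Cc by (auto simp: \<AA>_def subset.chain_def)
          have "(\<Sum>R\<in>F. ennreal (sidelen R powr \<beta>)) = (\<Sum>\<^sub>\<infinity>R\<in>F. ennreal (sidelen R powr \<beta>))"
            using F by simp
          also have "\<dots> \<le> (\<Sum>\<^sub>\<infinity>R\<in>{R\<in>X. R \<subseteq> Q'}. ennreal (sidelen R powr \<beta>))"
            by (rule infsum_ennreal_mono_set) (use F X in auto)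
          also have "\<dots> \<le> ennreal (2 * sidelen Q' powr \<beta>)" using XA Q' by (auto simp: pk_def)
          finally show ?thesis .
        qed
      qed
    qed
    then show "\<Union>C \<in> \<AA>" using sub by (simp add: \<AA>_def)
  qed
  then obtain M where M: "M \<in> \<AA>" "\<forall>X\<in>\<AA>. M \<subseteq> X \<longrightarrow> X = M" using Zorn_Lemma by blast
  have MP: "M \<subseteq> \<P>" "pk \<beta> a l M" using M(1) by (auto simp: \<AA>_def)
  define T where "T = (\<Sum>\<^sub>\<infinity>P\<in>M. ennreal (sidelen P powr \<beta>))"
  define SM where "SM W = (\<Sum>\<^sub>\<infinity>R\<in>{R\<in>M. R \<subseteq> W}. ennreal (sidelen R powr \<beta>))" for W
  define \<W> where "\<W> = {W\<in>dyadic a l. ennreal (sidelen W powr \<beta>) \<le> SM W}"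
  have cov: "\<forall>P\<in>\<P>. \<exists>W\<in>\<W>. P \<subseteq> W"
  proof
    fix P assume PP: "P \<in> \<P>"
    have Pd: "P \<in> dyadic a l" using PP P by auto
    show "\<exists>W\<in>\<W>. P \<subseteq> W"
    proof (cases "P \<in> M")
      case True
      have "ennreal (sidelen P powr \<beta>) = (\<Sum>\<^sub>\<infinity>R\<in>{P}. ennreal (sidelen R powr \<beta>))" by simp
      also have "\<dots> \<le> SM P" unfolding SM_def by (rule infsum_ennreal_mono_set) (use True in auto)
      finally have "P \<in> \<W>" using Pd by (simp add: \<W>_def)
      then show ?thesis by blast
    next
      case False
      have "\<not> pk \<beta> a l (insert P M)"
      proof
        assume "pk \<beta> a l (insert P M)"
        then have "insert P M \<in> \<AA>" using MP PP by (auto simp: \<AA>_def)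
        then have "insert P M = M" using M(2) by blast
        with False show False by blast
      qed
      then obtain Q' where Q': "Q' \<in> dyadic a l" and
        viol: "\<not> (\<Sum>\<^sub>\<infinity>R\<in>{R\<in>insert P M. R \<subseteq> Q'}. ennreal (sidelen R powr \<beta>)) \<le> ennreal (2 * sidelen Q' powr \<beta>)"
        unfolding pk_def by blast
      have PQ: "P \<subseteq> Q'"
      proof (rule ccontr)
        assume "\<not> P \<subseteq> Q'"
        then have "{R\<in>insert P M. R \<subseteq> Q'} = {R\<in>M. R \<subseteq> Q'}" by auto
        then show False using viol MP(2) Q' by (auto simp: pk_def)
      qed
      have eq: "{R\<in>insert P M. R \<subseteq> Q'} = insert P {R\<in>M. R \<subseteq> Q'}" using PQ by auto
      have sumeq: "(\<Sum>\<^sub>\<infinity>R\<in>{R\<in>insert P M. R \<subseteq> Q'}. ennreal (sidelen R powr \<beta>)) = ennreal (sidelen P powr \<beta>) + SM Q'"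
        unfolding eq SM_def by (rule infsum_insert) (use False in auto)
      have side: "sidelen P powr \<beta> \<le> sidelen Q' powr \<beta>"
        using dyadic_sub_side[OF l Pd Q' PQ] dyadic_sidelen_pos[OF l Pd] b
        by (intro powr_mono2) auto
      have "ennreal (sidelen Q' powr \<beta>) \<le> SM Q'"
      proof (rule ccontr)
        assume "\<not> ennreal (sidelen Q' powr \<beta>) \<le> SM Q'"
        then have "SM Q' \<le> ennreal (sidelen Q' powr \<beta>)" by simp
        then have "ennreal (sidelen P powr \<beta>) + SM Q' \<le> ennreal (sidelen Q' powr \<beta>) + ennreal (sidelen Q' powr \<beta>)"
          using side by (intro add_mono) auto
        also have "\<dots> = ennreal (2 * sidelen Q' powr \<beta>)"
          by (simp add: ennreal_plus[symmetric] del: ennreal_plus)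
        finally show False using viol sumeq by simp
      qed
      then have "Q' \<in> \<W>" using Q' by (simp add: \<W>_def)
      then show ?thesis using PQ by blast
    qed
  qed
  have "hcont \<beta> a l (\<Union>\<P>) \<le> T"
  proof (cases "T = top")
    case True then show ?thesis by simp
  next
    case False
    have SMT: "SM W \<le> T" for W unfolding SM_def T_def by (rule infsum_ennreal_mono_set) auto
    have Wd: "\<W> \<subseteq> dyadic a l" by (auto simp: \<W>_def)
    have bound: "\<forall>W\<in>\<W>. sidelen W \<le> (enn2real T) powr (1/\<beta>)"
    proof
      fix W assume W: "W \<in> \<W>"
      have pos: "0 < sidelen W" using W Wd dyadic_sidelen_pos[OF l] by auto
      have "ennreal (sidelen W powr \<beta>) \<le> T" using W SMT[of W] by (auto simp: \<W>_def)
      also have "T = ennreal (enn2real T)" using False by (simp add: ennreal_enn2real_if)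
      finally have le: "sidelen W powr \<beta> \<le> enn2real T" by (simp add: ennreal_le_iff)
      have "sidelen W = (sidelen W powr \<beta>) powr (1/\<beta>)" using pos b by (simp add: powr_powr)
      also have "\<dots> \<le> (enn2real T) powr (1/\<beta>)" using le b by (intro powr_mono2) auto
      finally show "sidelen W \<le> (enn2real T) powr (1/\<beta>)" .
    qed
    define \<W>m where "\<W>m = {W\<in>\<W>. \<forall>W'\<in>\<W>. W \<subseteq> W' \<longrightarrow> W' = W}"
    have cov2: "\<Union>\<P> \<subseteq> \<Union>\<W>m"
    proof
      fix x assume "x \<in> \<Union>\<P>"
      then obtain P where "P \<in> \<P>" "x \<in> P" by blast
      then obtain W where W: "W \<in> \<W>" "P \<subseteq> W" using cov by blast
      obtain W0 where "W0 \<in> \<W>" "W \<subseteq> W0" "\<forall>W'\<in>\<W>. W0 \<subseteq> W' \<longrightarrow> W' = W0"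
        using exists_max[OF l Wd bound W(1)] by blast
      then show "x \<in> \<Union>\<W>m" using W \<open>x \<in> P\<close> by (auto simp: \<W>m_def)
    qed
    have disjm: "\<forall>W1\<in>\<W>m. \<forall>W2\<in>\<W>m. W1 \<noteq> W2 \<longrightarrow> W1 \<inter> W2 = {}"
      using max_disjoint[OF l Wd] by (auto simp: \<W>m_def)
    have "hcont \<beta> a l (\<Union>\<P>) \<le> (\<Sum>\<^sub>\<infinity>W\<in>\<W>m. ennreal (sidelen W powr \<beta>))"
    proof (rule hcont_le)
      show "countable \<W>m" by (rule countable_subset[OF _ countable_dyadic[of a l]]) (use Wd in \<open>auto simp: \<W>m_def\<close>)
    qed (use cov2 Wd in \<open>auto simp: \<W>m_def\<close>)
    also have "\<dots> \<le> (\<Sum>\<^sub>\<infinity>W\<in>\<W>m. SM W)"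
      by (rule infsum_mono) (auto simp: \<W>m_def \<W>_def)
    also have "\<dots> \<le> T" unfolding SM_def T_def
      by (rule dsum[OF disjm]) (use MP P dyadic_nonempty[OF l] in auto)
    finally show ?thesis .
  qed
  then show ?thesis using MP unfolding T_def by blast
qed

lemma powr_bound:
  assumes "0 < s" "0 < \<beta>" "0 \<le> K" "ennreal (s powr \<beta>) \<le> ennreal K"
  shows "s \<le> K powr (1/\<beta>)"
proof -
  have le: "s powr \<beta> \<le> K" using assms by (simp add: ennreal_le_iff)
  have "s = (s powr \<beta>) powr (1/\<beta>)" using assms by (simp add: powr_powr)
  also have "\<dots> \<le> K powr (1/\<beta>)" using le assms by (intro powr_mono2) auto
  finally show ?thesis .
qed

lemma infsum_cmult_le:
  fixes f :: "'a \<Rightarrow> ennreal"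
  shows "(\<Sum>\<^sub>\<infinity>x\<in>A. c * f x) \<le> c * (\<Sum>\<^sub>\<infinity>x\<in>A. f x)"
proof (rule infsum_le_finite_sums)
  show "(\<lambda>x. c * f x) summable_on A" by simp
  fix F assume F: "finite F" "F \<subseteq> A"
  have "(\<Sum>x\<in>F. c * f x) = c * (\<Sum>x\<in>F. f x)" by (simp add: sum_distrib_left)
  also have "(\<Sum>x\<in>F. f x) = (\<Sum>\<^sub>\<infinity>x\<in>F. f x)" using F by simp
  also have "c * \<dots> \<le> c * (\<Sum>\<^sub>\<infinity>x\<in>A. f x)"
    by (intro mult_left_mono infsum_ennreal_mono_set F) simp
  finally show "(\<Sum>x\<in>F. c * f x) \<le> c * (\<Sum>\<^sub>\<infinity>x\<in>A. f x)" .
qed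

theorem theorem3p1:
  fixes \<beta> :: real and a :: "real^'n" and l :: real and C' :: real
  assumes "0 < \<beta>" and "\<beta> \<le> real CARD('n)"
    and "0 < l"
    and "0 < C'"
    and hyp: "\<And>(f :: real^'n \<Rightarrow> real) \<Q>.
       (\<forall>x. 0 \<le> f x) \<Longrightarrow> \<Q> \<subseteq> dyadic a l \<Longrightarrow> disjoint \<Q> \<Longrightarrow>
       (\<forall>Q'\<in>dyadic a l. (\<Sum>\<^sub>\<infinity> R\<in>{R\<in>\<Q>. R \<subseteq> Q'}. ennreal (sidelen R powr \<beta>))
                          \<le> ennreal (2 * sidelen Q' powr \<beta>)) \<Longrightarrow>
       (\<Sum>\<^sub>\<infinity> R\<in>\<Q>. choquet \<beta> a l R f) \<le> ennreal C' * choquet \<beta> a l (\<Union>\<Q>) f"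
  shows "\<forall>t>0. \<forall>f\<in>L1_content \<beta> a l.
           hcont \<beta> a l {x. maxfun \<beta> a l f x > ennreal t}
             \<le> ennreal (C' / t) * choquet \<beta> a l UNIV (\<lambda>x. \<bar>f x\<bar>)"
proof (intro allI impI ballI)
  fix t :: real and f :: "real^'n \<Rightarrow> real"
  assume t: "0 < t"
  have b: "0 < \<beta>" and l: "0 < l" and C: "0 < C'" using assms by auto
  define g where "g = (\<lambda>x. \<bar>f x\<bar>)"
  define I where "I = choquet \<beta> a l UNIV g"
  define A where "A S = choquet \<beta> a l S g" for S
  define E where "E = {x. maxfun \<beta> a l f x > ennreal t}"
  show "hcont \<beta> a l {x. maxfun \<beta> a l f x > ennreal t} \<le> ennreal (C' / t) * choquet \<beta> a l UNIV (\<lambda>x. \<bar>f x\<bar>)"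
  proof (cases "I = top")
    case True
    have "ennreal (C' / t) \<noteq> 0" using C t by simp
    then have "ennreal (C' / t) * I = top" using True by (simp add: ennreal_mult_top)
    then show ?thesis by (simp add: I_def g_def)
  next
    case False
    define \<G> where "\<G> = {Q\<in>dyadic a l. ennreal (sidelen Q powr \<beta>) \<le> ennreal (1/t) * A Q}"
    have Gd: "\<G> \<subseteq> dyadic a l" by (auto simp: \<G>_def)
    have EG: "E \<subseteq> \<Union>\<G>"
    proof
      fix x assume "x \<in> E"
      then have "ennreal t < maxfun \<beta> a l f x" by (simp add: E_def)
      then obtain Q where Q: "Q \<in> dyadic a l"
        and lt: "ennreal t < indicator Q x * ennreal (sidelen Q powr (- \<beta>)) * A Q"
        unfolding maxfun_def A_def g_def by (auto simp: less_SUP_iff)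
      have xQ: "x \<in> Q"
      proof (rule ccontr)
        assume "x \<notin> Q"
        then show False using lt by simp
      qed
      define s where "s = sidelen Q"
      have s: "0 < s" using dyadic_sidelen_pos[OF l Q] by (simp add: s_def)
      have lt2: "ennreal t \<le> ennreal (s powr (- \<beta>)) * A Q" using lt xQ by (simp add: s_def)
      have "ennreal (s powr \<beta>) = ennreal (s powr \<beta> / t) * ennreal t"
        using s t by (simp add: ennreal_mult[symmetric])
      also have "\<dots> \<le> ennreal (s powr \<beta> / t) * (ennreal (s powr (- \<beta>)) * A Q)"
        by (intro mult_left_mono lt2) simp
      also have "\<dots> = ennreal (s powr \<beta> / t * s powr (- \<beta>)) * A Q"
        using s t by (simp add: ennreal_mult[symmetric] mult.assoc[symmetric])
      also have "s powr \<beta> / t * s powr (- \<beta>) = 1 / t"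
        using s by (simp add: powr_minus field_simps)
      finally have "Q \<in> \<G>" using Q by (simp add: \<G>_def s_def)
      then show "x \<in> \<Union>\<G>" using xQ by blast
    qed
    have Ifin: "I = ennreal (enn2real I)" using False by (simp add: ennreal_enn2real_if)
    define K where "K = 1/t * enn2real I"
    have K0: "0 \<le> K" using t by (simp add: K_def)
    have bound: "\<forall>Q\<in>\<G>. sidelen Q \<le> K powr (1/\<beta>)"
    proof
      fix Q assume Q: "Q \<in> \<G>"
      have "ennreal (sidelen Q powr \<beta>) \<le> ennreal (1/t) * A Q" using Q by (simp add: \<G>_def)
      also have "\<dots> \<le> ennreal (1/t) * I" unfolding A_def I_def
        by (intro mult_left_mono choquet_mono) auto
      also have "\<dots> = ennreal K" using t by (subst Ifin) (simp add: K_def ennreal_mult[symmetric])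
      finally show "sidelen Q \<le> K powr (1/\<beta>)"
        using powr_bound[OF dyadic_sidelen_pos[OF l] b K0] Q Gd by auto
    qed
    define \<P> where "\<P> = {Q\<in>\<G>. \<forall>W'\<in>\<G>. Q \<subseteq> W' \<longrightarrow> W' = Q}"
    have Pd: "\<P> \<subseteq> dyadic a l" using Gd by (auto simp: \<P>_def)
    have EP: "E \<subseteq> \<Union>\<P>"
    proof
      fix x assume "x \<in> E"
      then obtain Q where Q: "Q \<in> \<G>" "x \<in> Q" using EG by blast
      obtain W where "W \<in> \<G>" "Q \<subseteq> W" "\<forall>W'\<in>\<G>. W \<subseteq> W' \<longrightarrow> W' = W"
        using exists_max[OF l Gd bound Q(1)] by blast
      then show "x \<in> \<Union>\<P>" using Q by (auto simp: \<P>_def)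
    qed
    have disjP: "disjoint \<P>"
      unfolding disjoint_def using max_disjoint[OF l Gd] by (auto simp: \<P>_def)
    obtain M where M: "M \<subseteq> \<P>" "pk \<beta> a l M"
      and hM: "hcont \<beta> a l (\<Union>\<P>) \<le> (\<Sum>\<^sub>\<infinity>P\<in>M. ennreal (sidelen P powr \<beta>))"
      using comb[OF l b Pd] by blast
    have MG: "M \<subseteq> \<G>" using M by (auto simp: \<P>_def)
    have "hcont \<beta> a l E \<le> hcont \<beta> a l (\<Union>\<P>)" using EP by (rule hcont_mono)
    also have "\<dots> \<le> (\<Sum>\<^sub>\<infinity>P\<in>M. ennreal (sidelen P powr \<beta>))" by (rule hM)
    also have "\<dots> \<le> (\<Sum>\<^sub>\<infinity>P\<in>M. ennreal (1/t) * A P)"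
      by (rule infsum_mono) (use MG in \<open>auto simp: \<G>_def\<close>)
    also have "\<dots> \<le> ennreal (1/t) * (\<Sum>\<^sub>\<infinity>P\<in>M. A P)" by (rule infsum_cmult_le)
    also have "(\<Sum>\<^sub>\<infinity>P\<in>M. A P) \<le> ennreal C' * A (\<Union>M)"
      unfolding A_def
    proof (rule hyp)
      show "\<forall>x. 0 \<le> g x" by (simp add: g_def)
      show "M \<subseteq> dyadic a l" using M Pd by auto
      show "disjoint M" using disjP M(1) by (rule pairwise_subset)
      show "\<forall>Q'\<in>dyadic a l. (\<Sum>\<^sub>\<infinity>R\<in>{R \<in> M. R \<subseteq> Q'}. ennreal (sidelen R powr \<beta>)) \<le> ennreal (2 * sidelen Q' powr \<beta>)"
        using M(2) by (simp add: pk_def)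
    qed
    also have "A (\<Union>M) \<le> I" unfolding A_def I_def by (rule choquet_mono) simp
    finally have "hcont \<beta> a l E \<le> ennreal (1/t) * (ennreal C' * I)"
      by (auto simp: mult_left_mono)
    also have "\<dots> = ennreal (C' / t) * I"
      using t C by (simp add: ennreal_mult[symmetric] mult.assoc[symmetric])
    finally show ?thesis by (simp add: E_def I_def g_def)
  qed
qed

end
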